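(* Let $\mathbf{X}\sim\mathcal{N}(0,\operatorname{diag}(\lambda_1,\dots,\lambda_M))$ with all $\lambda_i>0$. Fix $\theta\ge0$, set $\alpha_i=\big(\sqrt{\lambda_i^2+\theta^2}-\theta\big)/\lambda_i$, let $\mathbf{U}\sim\mathcal{N}(0,\mathbf{I})$ be independent of $\mathbf{X}$, and define $Z_i=\alpha_iX_i+\sqrt{1-\alpha_i^2}\sqrt{\lambda_i}\,U_i$ and $\hat{\mathbf{X}}=\mathbf{Z}$. Let $D=\mathbb{E}[\|\mathbf{X}-\hat{\mathbf{X}}\|^2]$. Then $\hat{\mathbf{X}}\sim\mathbf{X}$ and $$I[\mathbf{X},\hat{\mathbf{X}}]=\inf\Big\{I[\mathbf{X},\tilde{\mathbf{X}}]\;:\;\tilde{\mathbf{X}}\sim\mathbf{X},\ \mathbb{E}[\|\mathbf{X}-\tilde{\mathbf{X}}\|^2]\le D\Big\},$$ where the infimum is over all random vectors $\tilde{\mathbf{X}}$ jointly distributed with $\mathbf{X}$.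
   Context: $\tilde{\mathbf{X}}\sim\mathbf{X}$ means $\tilde{\mathbf{X}}$ has the same marginal distribution as $\mathbf{X}$. Logarithms are base 2. *)

theory Defs
  imports "HOL-Probability.Probability"
begin

text \<open>Random vectors indexed by a finite type 'i (the coordinates 1..M),
  valued in the product space of copies of the real line.\<close>
abbreviation vec_space :: "('i::finite \<Rightarrow> real) measure" where
  "vec_space \<equiv> PiM UNIV (\<lambda>_. borel)"

text \<open>Law of N(0, diag(lam)): product of centred normals with variances lam i
  (normal_density takes the standard deviation).\<close>
definition gauss_diag :: "('i::finite \<Rightarrow> real) \<Rightarrow> ('i \<Rightarrow> real) measure" where
  "gauss_diag lam = PiM UNIV (\<lambda>i. density lborel (normal_density 0 (sqrt (lam i))))"

text \<open>Relative entropy D(P || Q) in bits, with values in [0, infinity]: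
  it is infinite when P is not absolutely continuous w.r.t. Q, or when the
  log-density is not P-integrable (its negative part is always integrable,
  so non-integrability means divergence to +infinity).\<close>
definition rel_entropy2 :: "'a measure \<Rightarrow> 'a measure \<Rightarrow> ennreal" where
  "rel_entropy2 P Q =
     (if absolutely_continuous Q P \<and> integrable P (entropy_density 2 Q P)
      then ennreal (KL_divergence 2 Q P) else \<infinity>)"

definition mutual_info_joint :: "'a measure \<Rightarrow> 'b measure \<Rightarrow> ('a \<times> 'b) measure \<Rightarrow> ennreal" where
  "mutual_info_joint S T J = rel_entropy2 J (distr J S fst \<Otimes>\<^sub>M distr J T snd)"

definition sq_distortion :: "(('i::finite \<Rightarrow> real) \<times> ('i \<Rightarrow> real)) measure \<Rightarrow> ennreal" where
  "sq_distortion J = (\<integral>\<^sup>+ p. ennreal (\<Sum>i\<in>UNIV. (fst p i - snd p i)\<^sup>2) \<partial>J)"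

end

theory Submission
  imports Defs
begin

lemma PiM_density_lborel:
  fixes f :: "'i::finite \<Rightarrow> real \<Rightarrow> real"
  assumes [measurable]: "\<And>i. f i \<in> borel_measurable borel" and nn: "\<And>i x. 0 \<le> f i x"
    and ps: "\<And>i. prob_space (density lborel (f i))"
  shows "PiM UNIV (\<lambda>i. density lborel (f i)) = density (PiM UNIV (\<lambda>_. lborel)) (\<lambda>x. \<Prod>i\<in>UNIV. ennreal (f i (x i)))"
proof -
  interpret P: product_sigma_finite "\<lambda>i. density lborel (f i)"
    unfolding product_sigma_finite_def using ps prob_space_imp_sigma_finite by blast
  interpret L: product_sigma_finite "\<lambda>_::'i. lborel :: real measure"
    by (simp add: product_sigma_finite_def lborel.sigma_finite_measure_axioms)
  show ?thesis
  proof (rule P.PiM_eqI[symmetric])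
    show "finite (UNIV::'i set)" by simp
    show "sets (density (PiM UNIV (\<lambda>_. lborel)) (\<lambda>x. \<Prod>i\<in>UNIV. ennreal (f i (x i)))) = sets (PiM UNIV (\<lambda>i. density lborel (f i)))"
      unfolding sets_density by (intro sets_PiM_cong) auto
    fix A assume A: "\<And>i. i \<in> UNIV \<Longrightarrow> A i \<in> sets (density lborel (f i))"
    then have A'[measurable]: "\<And>i. A i \<in> sets borel" by simp
    have "emeasure (density (PiM UNIV (\<lambda>_. lborel)) (\<lambda>x. \<Prod>i\<in>UNIV. ennreal (f i (x i)))) (PiE UNIV A)
       = (\<integral>\<^sup>+x. (\<Prod>i\<in>UNIV. ennreal (f i (x i))) * indicator (PiE UNIV A) x \<partial>PiM UNIV (\<lambda>_. lborel))"
      by (rule emeasure_density) (auto intro!: sets_PiM_I_finite simp: A')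
    also have "\<dots> = (\<integral>\<^sup>+x. (\<Prod>i\<in>UNIV. ennreal (f i (x i)) * indicator (A i) (x i)) \<partial>PiM UNIV (\<lambda>_. lborel))"
      by (intro nn_integral_cong) (auto simp: prod.distrib indicator_def PiE_iff prod_zero_iff)
    also have "\<dots> = (\<Prod>i\<in>UNIV. \<integral>\<^sup>+x. ennreal (f i x) * indicator (A i) x \<partial>lborel)"
      by (rule L.product_nn_integral_prod) (simp, measurable)
    also have "\<dots> = (\<Prod>i\<in>UNIV. emeasure (density lborel (f i)) (A i))"
      by (intro prod.cong refl) (simp add: emeasure_density A')
    finally show "emeasure (density (PiM UNIV (\<lambda>_. lborel)) (\<lambda>x. \<Prod>i\<in>UNIV. ennreal (f i (x i)))) (PiE UNIV A) = (\<Prod>i\<in>UNIV. emeasure (density lborel (f i)) (A i))" .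
  qed
qed


lemma distr_std_normal_affine:
  assumes "b > 0"
  shows "distr (density lborel (normal_density 0 1)) borel (\<lambda>v. a + b * v) = density lborel (normal_density a b)"
proof -
  interpret N: prob_space "density lborel (normal_density 0 1)" by (rule prob_space_normal_density) simp
  have d: "distributed (density lborel (normal_density 0 1)) lborel (\<lambda>v. v) (normal_density 0 1)"
    unfolding distributed_def by (simp add: distr_id2)
  have "distributed (density lborel (normal_density 0 1)) lborel (\<lambda>v. a + b * v) (normal_density (a + b * 0) (\<bar>b\<bar> * 1))"
    using N.normal_density_affine[OF d, where \<alpha>=b and \<beta>=a] assms by simp
  then have "distr (density lborel (normal_density 0 1)) lborel (\<lambda>v. a + b * v) = density lborel (normal_density a b)"
    using assms unfolding distributed_def by simp
  moreover have "distr (density lborel (normal_density 0 1)) borel (\<lambda>v. a + b * v) = distr (density lborel (normal_density 0 1)) lborel (\<lambda>v. a + b * v)"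
    by (rule distr_cong) auto
  ultimately show ?thesis by simp
qed

lemma space_vec[simp]: "space (PiM (UNIV::'i::finite set) M) = UNIV" if "\<And>i. space (M i) = UNIV"
  using that by (auto simp: space_PiM PiE_iff)

lemma kernel_PiM:
  fixes c b :: "'i::finite \<Rightarrow> real"
  assumes bpos: "\<And>i. b i > 0"
  shows "distr (gauss_diag (\<lambda>_. 1)) vec_space (\<lambda>u. \<lambda>i. c i + b i * u i)
       = PiM UNIV (\<lambda>i. density lborel (normal_density (c i) (b i)))"
proof -
  interpret P: product_sigma_finite "\<lambda>i. density lborel (normal_density (c i) (b i))"
    unfolding product_sigma_finite_def using prob_space_normal_density[OF bpos] prob_space_imp_sigma_finite by blast
  interpret U: product_sigma_finite "\<lambda>i::'i. density lborel (normal_density 0 1)"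
    unfolding product_sigma_finite_def using prob_space_normal_density[of 1] prob_space_imp_sigma_finite by fastforce
  have GU: "gauss_diag (\<lambda>_::'i. 1) = PiM UNIV (\<lambda>i::'i. density lborel (normal_density 0 1))"
    by (simp add: gauss_diag_def)
  have meas[measurable]: "(\<lambda>u. \<lambda>i. c i + b i * u i) \<in> measurable (gauss_diag (\<lambda>_::'i. 1)) vec_space"
    unfolding GU by (intro measurable_PiM_single') (auto simp: space_PiM)
  show ?thesis
  proof (rule P.PiM_eqI)
    show "finite (UNIV::'i set)" by simp
    show "sets (distr (gauss_diag (\<lambda>_. 1)) vec_space (\<lambda>u i. c i + b i * u i)) = sets (PiM UNIV (\<lambda>i. density lborel (normal_density (c i) (b i))))"
      unfolding sets_distr by (intro sets_PiM_cong) auto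
    fix A assume A: "\<And>i. i \<in> UNIV \<Longrightarrow> A i \<in> sets (density lborel (normal_density (c i) (b i)))"
    then have A'[measurable]: "\<And>i. A i \<in> sets borel" by simp
    have pm[measurable]: "(\<lambda>v. c i + b i * v) -` A i \<in> sets borel" for i
      using measurable_sets[of "\<lambda>v. c i + b i * v" borel borel "A i"] by simp
    have pre: "(\<lambda>u i. c i + b i * u i) -` PiE UNIV A \<inter> space (gauss_diag (\<lambda>_. 1))
          = PiE UNIV (\<lambda>i. (\<lambda>v. c i + b i * v) -` A i)"
      unfolding GU by (auto simp: PiE_iff)
    have "emeasure (distr (gauss_diag (\<lambda>_. 1)) vec_space (\<lambda>u i. c i + b i * u i)) (PiE UNIV A)
        = emeasure (gauss_diag (\<lambda>_. 1)) (PiE UNIV (\<lambda>i. (\<lambda>v. c i + b i * v) -` A i))"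
      by (subst emeasure_distr) (auto intro!: sets_PiM_I_finite simp: pre)
    also have "\<dots> = (\<Prod>i\<in>UNIV. emeasure (density lborel (normal_density 0 1)) ((\<lambda>v. c i + b i * v) -` A i))"
      unfolding GU by (rule U.emeasure_PiM) auto
    also have "\<dots> = (\<Prod>i\<in>UNIV. emeasure (distr (density lborel (normal_density 0 1)) borel (\<lambda>v. c i + b i * v)) (A i))"
      by (intro prod.cong refl) (subst emeasure_distr, auto)
    also have "\<dots> = (\<Prod>i\<in>UNIV. emeasure (density lborel (normal_density (c i) (b i))) (A i))"
      by (intro prod.cong refl) (simp add: distr_std_normal_affine bpos)
    finally show "emeasure (distr (gauss_diag (\<lambda>_. 1)) vec_space (\<lambda>u i. c i + b i * u i)) (PiE UNIV A) =
        (\<Prod>i\<in>UNIV. emeasure (density lborel (normal_density (c i) (b i))) (A i))" .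
  qed
qed

lemma distr_pair_kernel:
  assumes A: "sigma_finite_measure A" and B: "sigma_finite_measure B" and C: "sigma_finite_measure C"
    and h[measurable]: "(\<lambda>(x,u). h x u) \<in> measurable (A \<Otimes>\<^sub>M B) C"
    and G[measurable]: "(\<lambda>(x,y). G x y) \<in> borel_measurable (A \<Otimes>\<^sub>M C)"
    and K: "\<And>x. x \<in> space A \<Longrightarrow> distr B C (h x) = density C (G x)"
  shows "distr (A \<Otimes>\<^sub>M B) (A \<Otimes>\<^sub>M C) (\<lambda>(x,u). (x, h x u)) = density (A \<Otimes>\<^sub>M C) (\<lambda>(x,y). G x y)"
proof (rule measure_eqI)
  interpret A: sigma_finite_measure A by fact
  interpret B: sigma_finite_measure B by fact
  interpret C: sigma_finite_measure C by fact
  show "sets (distr (A \<Otimes>\<^sub>M B) (A \<Otimes>\<^sub>M C) (\<lambda>(x,u). (x, h x u))) = sets (density (A \<Otimes>\<^sub>M C) (\<lambda>(x,y). G x y))"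
    by simp
  fix S assume "S \<in> sets (distr (A \<Otimes>\<^sub>M B) (A \<Otimes>\<^sub>M C) (\<lambda>(x,u). (x, h x u)))"
  then have S[measurable]: "S \<in> sets (A \<Otimes>\<^sub>M C)" by simp
  have hx[measurable]: "x \<in> space A \<Longrightarrow> h x \<in> measurable B C" for x
    using measurable_Pair2[OF h] by simp
  have T[measurable]: "(\<lambda>(x,u). (x, h x u)) \<in> measurable (A \<Otimes>\<^sub>M B) (A \<Otimes>\<^sub>M C)"
    by measurable
  have "emeasure (distr (A \<Otimes>\<^sub>M B) (A \<Otimes>\<^sub>M C) (\<lambda>(x,u). (x, h x u))) S
      = (\<integral>\<^sup>+p. indicator S p \<partial>distr (A \<Otimes>\<^sub>M B) (A \<Otimes>\<^sub>M C) (\<lambda>(x,u). (x, h x u)))"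
    by simp
  also have "\<dots> = (\<integral>\<^sup>+p. indicator S (fst p, h (fst p) (snd p)) \<partial>(A \<Otimes>\<^sub>M B))"
    by (subst nn_integral_distr) (auto simp: case_prod_beta)
  also have "\<dots> = (\<integral>\<^sup>+x. \<integral>\<^sup>+u. indicator S (x, h x u) \<partial>B \<partial>A)"
    by (subst B.nn_integral_fst[symmetric]) auto
  also have "\<dots> = (\<integral>\<^sup>+x. \<integral>\<^sup>+y. indicator S (x, y) \<partial>distr B C (h x) \<partial>A)"
    by (intro nn_integral_cong, subst nn_integral_distr) auto
  also have "\<dots> = (\<integral>\<^sup>+x. \<integral>\<^sup>+y. G x y * indicator S (x, y) \<partial>C \<partial>A)"
    by (intro nn_integral_cong) (simp add: K nn_integral_density)
  also have "\<dots> = (\<integral>\<^sup>+p. (\<lambda>(x,y). G x y) p * indicator S p \<partial>(A \<Otimes>\<^sub>M C))"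
    by (subst C.nn_integral_fst[symmetric]) auto
  also have "\<dots> = emeasure (density (A \<Otimes>\<^sub>M C) (\<lambda>(x,y). G x y)) S"
    by (simp add: emeasure_density)
  finally show "emeasure (distr (A \<Otimes>\<^sub>M B) (A \<Otimes>\<^sub>M C) (\<lambda>(x,u). (x, h x u))) S = emeasure (density (A \<Otimes>\<^sub>M C) (\<lambda>(x,y). G x y)) S" .
qed



definition kk :: "real \<Rightarrow> real \<Rightarrow> real \<Rightarrow> real \<Rightarrow> real" where
  "kk \<rho> l x y = exp (- ln (sqrt (1 - \<rho>\<^sup>2)) + (\<rho> - \<rho>\<^sup>2) / (2 * (1 - \<rho>\<^sup>2) * l) * (x\<^sup>2 + y\<^sup>2)
      - \<rho> / (2 * (1 - \<rho>\<^sup>2) * l) * (x - y)\<^sup>2)"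

lemma kk_pos: "kk \<rho> l x y > 0" by (simp add: kk_def)

lemma kk_sym: "kk \<rho> l x y = kk \<rho> l y x"
  unfolding kk_def by (simp add: add.commute power2_commute)

lemma exp_identity:
  assumes q: "1 - \<rho>\<^sup>2 \<noteq> 0" and l: "(l::real) \<noteq> 0"
  shows "(\<rho> - \<rho>\<^sup>2) / (2 * (1 - \<rho>\<^sup>2) * l) * (x\<^sup>2 + y\<^sup>2) - \<rho> / (2 * (1 - \<rho>\<^sup>2) * l) * (x - y)\<^sup>2
       + (- (y - 0)\<^sup>2 / (2 * l)) = - (y - \<rho> * x)\<^sup>2 / (2 * ((1 - \<rho>\<^sup>2) * l))"
proof -
  define c where "c = 1 - \<rho>\<^sup>2"
  have c0: "c \<noteq> 0" using q c_def by simp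
  have "(\<rho> - \<rho>\<^sup>2) / (2 * c * l) * (x\<^sup>2 + y\<^sup>2) - \<rho> / (2 * c * l) * (x - y)\<^sup>2
       + (- (y - 0)\<^sup>2 / (2 * l)) = ((\<rho> - \<rho>\<^sup>2) * (x\<^sup>2 + y\<^sup>2) - \<rho> * (x - y)\<^sup>2 - c * y\<^sup>2) / (2 * c * l)"
    using c0 l by (simp add: field_simps)
  also have "(\<rho> - \<rho>\<^sup>2) * (x\<^sup>2 + y\<^sup>2) - \<rho> * (x - y)\<^sup>2 - c * y\<^sup>2 = - (y - \<rho> * x)\<^sup>2"
    unfolding c_def by (simp add: power2_eq_square algebra_simps)
  finally show ?thesis unfolding c_def by (simp add: mult.assoc)
qed

lemma kk_eq:
  assumes r: "0 < \<rho>" "\<rho> < 1" and l: "l > 0"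
  shows "kk \<rho> l x y * normal_density 0 (sqrt l) y = normal_density (\<rho> * x) (sqrt (1 - \<rho>\<^sup>2) * sqrt l) y"
proof -
  have q: "0 < 1 - \<rho>\<^sup>2" using r by (simp add: power2_eq_square) (metis mult_strict_mono' less_eq_real_def mult_1 r(2) r(1) diff_gt_0_iff_gt)
  have e1: "exp (- ln (sqrt (1 - \<rho>\<^sup>2))) = 1 / sqrt (1 - \<rho>\<^sup>2)"
    using q by (simp add: exp_minus inverse_eq_divide)
  have sq: "(sqrt (1 - \<rho>\<^sup>2) * sqrt l)\<^sup>2 = (1 - \<rho>\<^sup>2) * l"
    using q l by (simp add: power_mult_distrib)
  have c: "1 / sqrt (1 - \<rho>\<^sup>2) * (1 / sqrt (2 * pi * (sqrt l)\<^sup>2)) = 1 / sqrt (2 * pi * (sqrt (1 - \<rho>\<^sup>2) * sqrt l)\<^sup>2)"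
    using q l by (simp add: sq real_sqrt_mult)
  have ex: "(\<rho> - \<rho>\<^sup>2) / (2 * (1 - \<rho>\<^sup>2) * l) * (x\<^sup>2 + y\<^sup>2) - \<rho> / (2 * (1 - \<rho>\<^sup>2) * l) * (x - y)\<^sup>2
       + (- (y - 0)\<^sup>2 / (2 * (sqrt l)\<^sup>2)) = - (y - \<rho> * x)\<^sup>2 / (2 * (sqrt (1 - \<rho>\<^sup>2) * sqrt l)\<^sup>2)"
    using q l unfolding sq by (subst exp_identity[symmetric]) auto
  have "kk \<rho> l x y * normal_density 0 (sqrt l) y
     = exp (- ln (sqrt (1 - \<rho>\<^sup>2))) * (1 / sqrt (2 * pi * (sqrt l)\<^sup>2)) *
       exp ((\<rho> - \<rho>\<^sup>2) / (2 * (1 - \<rho>\<^sup>2) * l) * (x\<^sup>2 + y\<^sup>2) - \<rho> / (2 * (1 - \<rho>\<^sup>2) * l) * (x - y)\<^sup>2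
       + (- (y - 0)\<^sup>2 / (2 * (sqrt l)\<^sup>2)))"
    unfolding kk_def normal_density_def by (simp add: exp_add[symmetric] exp_diff algebra_simps)
  also have "\<dots> = normal_density (\<rho> * x) (sqrt (1 - \<rho>\<^sup>2) * sqrt l) y"
    unfolding ex e1 c normal_density_def by simp
  finally show ?thesis .
qed


definition GG :: "('i::finite \<Rightarrow> real) \<Rightarrow> ('i \<Rightarrow> real) \<Rightarrow> ('i \<Rightarrow> real) \<Rightarrow> ('i \<Rightarrow> real) \<Rightarrow> real" where
  "GG lam \<rho> x y = (\<Prod>i\<in>UNIV. kk (\<rho> i) (lam i) (x i) (y i))"

lemma GG_pos: "GG lam \<rho> x y > 0" by (simp add: GG_def kk_pos prod_pos)

lemma GG_sym: "GG lam \<rho> x y = GG lam \<rho> y x" by (simp add: GG_def kk_sym)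


lemma GG_measurable[measurable]: "(\<lambda>p. GG lam \<rho> (fst p) (snd p)) \<in> borel_measurable (vec_space \<Otimes>\<^sub>M vec_space)"
  unfolding GG_def kk_def by measurable

lemma gauss_diag_density:
  assumes "\<And>i. lam i > 0"
  shows "gauss_diag lam = density (PiM UNIV (\<lambda>_. lborel)) (\<lambda>y. \<Prod>i\<in>UNIV. ennreal (normal_density 0 (sqrt (lam i)) (y i)))"
  unfolding gauss_diag_def
  by (rule PiM_density_lborel) (auto intro!: prob_space_normal_density simp: assms)

lemma kernel_gauss:
  fixes lam \<rho> x :: "'i::finite \<Rightarrow> real"
  assumes lam_pos: "\<And>i. lam i > 0" and r0: "\<And>i. 0 < \<rho> i" and r1: "\<And>i. \<rho> i < 1"
  shows "distr (gauss_diag (\<lambda>_. 1)) vec_space (\<lambda>u i. \<rho> i * x i + sqrt (1 - (\<rho> i)\<^sup>2) * sqrt (lam i) * u i)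
       = density (gauss_diag lam) (\<lambda>y. ennreal (GG lam \<rho> x y))"
proof -
  have q: "0 < 1 - (\<rho> i)\<^sup>2" for i
    using r0[of i] r1[of i] by (simp add: power2_eq_square) (metis mult_strict_mono' less_eq_real_def mult_1 diff_gt_0_iff_gt)
  have b: "0 < sqrt (1 - (\<rho> i)\<^sup>2) * sqrt (lam i)" for i using q[of i] lam_pos[of i] by simp
  have "distr (gauss_diag (\<lambda>_. 1)) vec_space (\<lambda>u i. \<rho> i * x i + sqrt (1 - (\<rho> i)\<^sup>2) * sqrt (lam i) * u i)
      = PiM UNIV (\<lambda>i. density lborel (normal_density (\<rho> i * x i) (sqrt (1 - (\<rho> i)\<^sup>2) * sqrt (lam i))))"
    by (rule kernel_PiM) (rule b)
  also have "\<dots> = density (PiM UNIV (\<lambda>_. lborel)) (\<lambda>y. \<Prod>i\<in>UNIV. ennreal (normal_density (\<rho> i * x i) (sqrt (1 - (\<rho> i)\<^sup>2) * sqrt (lam i)) (y i)))"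
    by (rule PiM_density_lborel) (auto intro!: prob_space_normal_density simp: b)
  also have "\<dots> = density (PiM UNIV (\<lambda>_. lborel)) (\<lambda>y. (\<Prod>i\<in>UNIV. ennreal (normal_density 0 (sqrt (lam i)) (y i))) * ennreal (GG lam \<rho> x y))"
  proof (intro density_cong refl AE_I2)
    fix y :: "'i \<Rightarrow> real"
    have "(\<Prod>i\<in>UNIV. ennreal (normal_density 0 (sqrt (lam i)) (y i))) * ennreal (GG lam \<rho> x y)
        = ennreal ((\<Prod>i\<in>UNIV. normal_density 0 (sqrt (lam i)) (y i)) * GG lam \<rho> x y)"
      by (simp add: prod_ennreal ennreal_mult' prod_nonneg)
    also have "\<dots> = ennreal (\<Prod>i\<in>UNIV. kk (\<rho> i) (lam i) (x i) (y i) * normal_density 0 (sqrt (lam i)) (y i))"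
      by (simp add: GG_def prod.distrib mult.commute)
    also have "\<dots> = ennreal (\<Prod>i\<in>UNIV. normal_density (\<rho> i * x i) (sqrt (1 - (\<rho> i)\<^sup>2) * sqrt (lam i)) (y i))"
      by (simp add: kk_eq r0 r1 lam_pos)
    also have "\<dots> = (\<Prod>i\<in>UNIV. ennreal (normal_density (\<rho> i * x i) (sqrt (1 - (\<rho> i)\<^sup>2) * sqrt (lam i)) (y i)))"
      by (simp add: prod_ennreal)
    finally show "(\<Prod>i\<in>UNIV. ennreal (normal_density (\<rho> i * x i) (sqrt (1 - (\<rho> i)\<^sup>2) * sqrt (lam i)) (y i)))
       = (\<Prod>i\<in>UNIV. ennreal (normal_density 0 (sqrt (lam i)) (y i))) * ennreal (GG lam \<rho> x y)" by simp
  qed (auto simp: GG_def kk_def)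
  also have "\<dots> = density (gauss_diag lam) (\<lambda>y. ennreal (GG lam \<rho> x y))"
    by (subst gauss_diag_density[OF lam_pos], subst density_density_eq) (auto simp: GG_def kk_def)
  finally show ?thesis .
qed



lemma sets_gauss[measurable_cong, simp]: "sets (gauss_diag lam) = sets (vec_space :: ('i::finite \<Rightarrow> real) measure)"
  unfolding gauss_diag_def by (intro sets_PiM_cong) auto

lemma space_gauss[simp]: "space (gauss_diag lam) = (UNIV :: ('i::finite \<Rightarrow> real) set)"
  unfolding gauss_diag_def by (auto simp: space_PiM PiE_iff)

lemma space_vec_space[simp]: "space (vec_space :: ('i::finite \<Rightarrow> real) measure) = UNIV"
  by (auto simp: space_PiM PiE_iff)

lemma prob_space_gauss: "(\<And>i. lam i > 0) \<Longrightarrow> prob_space (gauss_diag (lam :: 'i::finite \<Rightarrow> real))"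
  unfolding gauss_diag_def by (rule prob_space_PiM) (auto intro: prob_space_normal_density)

lemma meas_T[measurable]:
  fixes a b :: "'i::finite \<Rightarrow> real"
  shows "(\<lambda>(x, u). \<lambda>i. a i * x i + b i * u i) \<in> measurable (vec_space \<Otimes>\<^sub>M vec_space) (vec_space :: ('i \<Rightarrow> real) measure)"
  by (intro measurable_PiM_single') (auto simp: space_PiM case_prod_beta)

lemma joint_law:
  fixes X U :: "'a \<Rightarrow> 'i::finite \<Rightarrow> real" and lam \<rho> :: "'i \<Rightarrow> real"
  assumes "prob_space M"
    and lam_pos: "\<And>i. lam i > 0" and r0: "\<And>i. 0 < \<rho> i" and r1: "\<And>i. \<rho> i < 1"
    and X_meas[measurable]: "X \<in> measurable M vec_space"
    and U_meas[measurable]: "U \<in> measurable M vec_space"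
    and X_law: "distr M vec_space X = gauss_diag lam"
    and U_law: "distr M vec_space U = gauss_diag (\<lambda>_. 1)"
    and indep: "prob_space.indep_var M vec_space X vec_space U"
  shows "distr M (vec_space \<Otimes>\<^sub>M vec_space) (\<lambda>\<omega>. (X \<omega>, \<lambda>i. \<rho> i * X \<omega> i + sqrt (1 - (\<rho> i)\<^sup>2) * sqrt (lam i) * U \<omega> i))
     = density (gauss_diag lam \<Otimes>\<^sub>M gauss_diag lam) (\<lambda>p. ennreal (GG lam \<rho> (fst p) (snd p)))"
proof -
  interpret prob_space M by fact
  have sfX: "sigma_finite_measure (gauss_diag lam)"
    by (rule prob_space_imp_sigma_finite, rule prob_space_gauss, rule lam_pos)
  define b where "b i = sqrt (1 - (\<rho> i)\<^sup>2) * sqrt (lam i)" for i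
  let ?T = "\<lambda>(x, u). (x::'i\<Rightarrow>real, \<lambda>i. \<rho> i * x i + b i * u i)"
  have Tm[measurable]: "?T \<in> measurable (vec_space \<Otimes>\<^sub>M vec_space) (vec_space \<Otimes>\<^sub>M vec_space)"
    by measurable
  have XU: "distr M (vec_space \<Otimes>\<^sub>M vec_space) (\<lambda>\<omega>. (X \<omega>, U \<omega>)) = gauss_diag lam \<Otimes>\<^sub>M gauss_diag (\<lambda>_. 1)"
    using indep unfolding indep_var_distribution_eq X_law U_law by simp
  have "distr M (vec_space \<Otimes>\<^sub>M vec_space) (\<lambda>\<omega>. (X \<omega>, \<lambda>i. \<rho> i * X \<omega> i + sqrt (1 - (\<rho> i)\<^sup>2) * sqrt (lam i) * U \<omega> i))
      = distr (distr M (vec_space \<Otimes>\<^sub>M vec_space) (\<lambda>\<omega>. (X \<omega>, U \<omega>))) (vec_space \<Otimes>\<^sub>M vec_space) ?T"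
    by (subst distr_distr) (auto simp: comp_def b_def)
  also have "\<dots> = distr (gauss_diag lam \<Otimes>\<^sub>M gauss_diag (\<lambda>_. 1)) (gauss_diag lam \<Otimes>\<^sub>M gauss_diag lam) ?T"
    unfolding XU by (intro distr_cong) auto
  also have "\<dots> = density (gauss_diag lam \<Otimes>\<^sub>M gauss_diag lam) (\<lambda>(x, y). ennreal (GG lam \<rho> x y))"
  proof (rule distr_pair_kernel)
    show "sigma_finite_measure (gauss_diag lam)" "sigma_finite_measure (gauss_diag (\<lambda>_::'i. 1))"
      using sfX prob_space_gauss[of "\<lambda>_::'i. 1"] by (auto intro: prob_space_imp_sigma_finite)
    show "(\<lambda>(x, u). \<lambda>i. \<rho> i * x i + b i * u i) \<in> gauss_diag lam \<Otimes>\<^sub>M gauss_diag (\<lambda>_. 1) \<rightarrow>\<^sub>M gauss_diag lam"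
      by measurable
    show "(\<lambda>(x, y). ennreal (GG lam \<rho> x y)) \<in> borel_measurable (gauss_diag lam \<Otimes>\<^sub>M gauss_diag lam)"
      using GG_measurable[of lam \<rho>] by (simp add: case_prod_beta)
    fix x :: "'i \<Rightarrow> real"
    show "distr (gauss_diag (\<lambda>_. 1)) (gauss_diag lam) (\<lambda>u i. \<rho> i * x i + b i * u i) = density (gauss_diag lam) (\<lambda>y. ennreal (GG lam \<rho> x y))"
      using kernel_gauss[OF lam_pos r0 r1, where x=x] unfolding b_def
      by (subst distr_cong[of _ _ _ vec_space]) auto
  qed (fact sfX)
  finally show ?thesis by (simp only: case_prod_beta')
qed



lemma gibbs:
  fixes g :: "'b \<Rightarrow> real"
  assumes Q: "sigma_finite_measure Q" and J: "prob_space J" and sJ: "sets J = sets Q"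
    and ac: "absolutely_continuous Q J"
    and ed: "integrable J (entropy_density 2 Q J)"
    and g[measurable]: "g \<in> borel_measurable Q" and gpos: "\<And>z. 0 < g z"
    and gint: "(\<integral>\<^sup>+z. ennreal (g z) \<partial>Q) \<le> 1"
    and lg: "integrable J (\<lambda>z. log 2 (g z))"
  shows "(\<integral>z. log 2 (g z) \<partial>J) \<le> KL_divergence 2 Q J"
proof -
  interpret Q: sigma_finite_measure Q by fact
  interpret J: prob_space J by fact
  define h where "h = RN_deriv Q J"
  have hm[measurable]: "h \<in> borel_measurable Q" unfolding h_def by simp
  have Jd: "J = density Q h" unfolding h_def using Q.density_RN_deriv[OF ac sJ] by simp
  have fin: "AE z in J. h z \<noteq> \<infinity>"
    using absolutely_continuous_AE[OF sJ ac Q.RN_deriv_finite[OF prob_space_imp_sigma_finite[OF J] ac sJ]]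
    unfolding h_def .
  have pos: "AE z in J. h z \<noteq> 0"
    by (subst Jd, subst AE_density) auto
  define h' where "h' z = enn2real (h z)" for z
  have h'm[measurable]: "h' \<in> borel_measurable Q" unfolding h'_def by simp
  have AEh: "AE z in J. 0 < h' z \<and> ennreal (h' z) = h z"
    using fin pos by eventually_elim (auto simp: h'_def enn2real_positive_iff less_top zero_less_iff_neq_zero)
  have KL: "KL_divergence 2 Q J = (\<integral>z. log 2 (h' z) \<partial>J)"
    unfolding KL_divergence_def entropy_density_def h'_def h_def comp_def ..
  have ed': "integrable J (\<lambda>z. log 2 (h' z))"
    using ed unfolding entropy_density_def h'_def h_def comp_def .
  note sJ[measurable_cong]
  have rm[measurable]: "(\<lambda>z. g z / h' z) \<in> borel_measurable J"
    by measurable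
  have pw: "h z * ennreal (g z / h' z) \<le> ennreal (g z)" for z
  proof (cases "h z = \<infinity>")
    case True then show ?thesis by (simp add: h'_def)
  next
    case False
    then have hz: "h z = ennreal (h' z)" by (simp add: h'_def less_top)
    show ?thesis
    proof (cases "h' z = 0")
      case True then show ?thesis by (simp add: hz)
    next
      case False
      then have "h' z > 0" by (simp add: h'_def enn2real_nonneg less_le)
      then show ?thesis using gpos[of z] by (simp add: hz ennreal_mult''[symmetric])
    qed
  qed
  have nnq: "(\<integral>\<^sup>+z. ennreal (g z / h' z) \<partial>J) \<le> 1"
  proof -
    have "(\<integral>\<^sup>+z. ennreal (g z / h' z) \<partial>J) = (\<integral>\<^sup>+z. h z * ennreal (g z / h' z) \<partial>Q)"
      by (subst Jd, subst nn_integral_density) auto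
    also have "\<dots> \<le> (\<integral>\<^sup>+z. ennreal (g z) \<partial>Q)"
      by (intro nn_integral_mono pw)
    finally show ?thesis using gint by simp
  qed
  have nn: "0 \<le> g z / h' z" for z using gpos[of z] by (simp add: h'_def)
  have int_r: "integrable J (\<lambda>z. g z / h' z)"
  proof (rule integrableI_bounded)
    have "(\<integral>\<^sup>+ x. ennreal (norm (g x / h' x)) \<partial>J) = (\<integral>\<^sup>+z. ennreal (g z / h' z) \<partial>J)"
      by (intro nn_integral_cong) (use nn in \<open>simp only: real_norm_def abs_of_nonneg\<close>)
    also have "\<dots> < \<top>" using nnq by (rule order.strict_trans1) simp
    finally show "(\<integral>\<^sup>+ x. ennreal (norm (g x / h' x)) \<partial>J) < \<infinity>" by simp
  qed simp
  have int_le: "(\<integral>z. g z / h' z \<partial>J) \<le> 1"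
  proof -
    have "ennreal (\<integral>z. g z / h' z \<partial>J) = (\<integral>\<^sup>+z. ennreal (g z / h' z) \<partial>J)"
      by (rule nn_integral_eq_integral[symmetric]) (use int_r nn in auto)
    with nnq have "ennreal (\<integral>z. g z / h' z \<partial>J) \<le> 1" by simp
    then show ?thesis using ennreal_le_1 by blast
  qed
  have "(\<integral>z. log 2 (g z) \<partial>J) - (\<integral>z. log 2 (h' z) \<partial>J) = (\<integral>z. log 2 (g z) - log 2 (h' z) \<partial>J)"
    by (rule Bochner_Integration.integral_diff[symmetric]) (fact lg, fact ed')
  also have "\<dots> \<le> (\<integral>z. (g z / h' z - 1) / ln 2 \<partial>J)"
  proof (rule integral_mono_AE)
    show "integrable J (\<lambda>z. log 2 (g z) - log 2 (h' z))" using lg ed' by simp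
    show "integrable J (\<lambda>z. (g z / h' z - 1) / ln 2)" using int_r by simp
    show "AE z in J. log 2 (g z) - log 2 (h' z) \<le> (g z / h' z - 1) / ln 2"
      using AEh
    proof eventually_elim
      case (elim z)
      then have hp: "0 < h' z" by simp
      have "log 2 (g z) - log 2 (h' z) = ln (g z / h' z) / ln 2"
        using hp gpos[of z] by (simp add: log_def ln_div diff_divide_distrib)
      also have "\<dots> \<le> (g z / h' z - 1) / ln 2"
        using hp gpos[of z] by (intro divide_right_mono ln_le_minus_one) auto
      finally show ?case .
    qed
  qed
  also have "\<dots> = ((\<integral>z. g z / h' z \<partial>J) - 1) / ln 2"
    using int_r by (simp add: J.prob_space)
  also have "\<dots> \<le> 0"
    using int_le by (simp add: divide_nonpos_pos)
  finally show ?thesis unfolding KL by simp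
qed



lemma rel_entropy_density:
  fixes g :: "'b \<Rightarrow> real"
  assumes Q: "sigma_finite_measure Q" and g[measurable]: "g \<in> borel_measurable Q" and gpos: "\<And>z. 0 < g z"
    and lg: "integrable (density Q (\<lambda>z. ennreal (g z))) (\<lambda>z. log 2 (g z))"
  shows "rel_entropy2 (density Q (\<lambda>z. ennreal (g z))) Q = ennreal (\<integral>z. log 2 (g z) \<partial>density Q (\<lambda>z. ennreal (g z)))"
proof -
  interpret Q: sigma_finite_measure Q by fact
  let ?J = "density Q (\<lambda>z. ennreal (g z))"
  have ac: "absolutely_continuous Q ?J" by (rule absolutely_continuousI_density) simp
  have "density Q (RN_deriv Q ?J) = ?J" by (rule density_RN_deriv_density) simp
  then have "AE z in Q. RN_deriv Q ?J z = ennreal (g z)"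
    by (intro Q.density_unique) auto
  then have "AE z in ?J. RN_deriv Q ?J z = ennreal (g z)"
    by (rule absolutely_continuous_AE[OF sets_density ac])
  then have ae: "AE z in ?J. entropy_density 2 Q ?J z = log 2 (g z)"
    by eventually_elim (use gpos in \<open>auto simp: entropy_density_def less_imp_le\<close>)
  have ed: "integrable ?J (entropy_density 2 Q ?J)"
    using lg by (rule integrable_cong_AE_imp) (use ae in \<open>auto simp: eq_commute\<close>)
  have "KL_divergence 2 Q ?J = (\<integral>z. log 2 (g z) \<partial>?J)"
    unfolding KL_divergence_def by (rule integral_cong_AE) (use ae in auto)
  then show ?thesis unfolding rel_entropy2_def using ac ed by simp
qed



lemma vec_UNIV[measurable]: "UNIV \<in> sets (vec_space :: ('i::finite \<Rightarrow> real) measure)"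
  using sets.top[of "vec_space :: ('i::finite \<Rightarrow> real) measure"] by simp

lemma GG_meas2[measurable]: "(\<lambda>y. GG lam \<rho> x y) \<in> borel_measurable (vec_space :: ('i::finite \<Rightarrow> real) measure)"
  unfolding GG_def kk_def by measurable

lemma GG_int_snd:
  fixes lam \<rho> :: "'i::finite \<Rightarrow> real"
  assumes lam_pos: "\<And>i. lam i > 0" and r0: "\<And>i. 0 < \<rho> i" and r1: "\<And>i. \<rho> i < 1"
  shows "(\<integral>\<^sup>+ y. ennreal (GG lam \<rho> x y) \<partial>gauss_diag lam) = 1"
proof -
  interpret PU: prob_space "gauss_diag (\<lambda>_::'i. 1)" by (rule prob_space_gauss) simp
  have "(\<integral>\<^sup>+ y. ennreal (GG lam \<rho> x y) \<partial>gauss_diag lam) = emeasure (density (gauss_diag lam) (\<lambda>y. ennreal (GG lam \<rho> x y))) UNIV"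
    by (subst emeasure_density) (auto simp: GG_def kk_def)
  also have "\<dots> = emeasure (distr (gauss_diag (\<lambda>_. 1)) vec_space (\<lambda>u i. \<rho> i * x i + sqrt (1 - (\<rho> i)\<^sup>2) * sqrt (lam i) * u i)) UNIV"
    by (simp add: kernel_gauss[OF lam_pos r0 r1])
  also have "\<dots> = 1"
    by (subst emeasure_distr) (auto intro!: measurable_PiM_single' simp: PU.emeasure_space_1[simplified])
  finally show ?thesis .
qed

lemma GG_int_total:
  fixes lam \<rho> :: "'i::finite \<Rightarrow> real"
  assumes lam_pos: "\<And>i. lam i > 0" and r0: "\<And>i. 0 < \<rho> i" and r1: "\<And>i. \<rho> i < 1"
  shows "(\<integral>\<^sup>+ p. ennreal (GG lam \<rho> (fst p) (snd p)) \<partial>(gauss_diag lam \<Otimes>\<^sub>M gauss_diag lam)) = 1"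
proof -
  interpret PX: prob_space "gauss_diag lam" by (rule prob_space_gauss) (rule lam_pos)
  have m: "(\<lambda>p. ennreal (GG lam \<rho> (fst p) (snd p))) \<in> borel_measurable (gauss_diag lam \<Otimes>\<^sub>M gauss_diag lam)"
    using GG_measurable[of lam \<rho>] by simp
  have "(\<integral>\<^sup>+ p. ennreal (GG lam \<rho> (fst p) (snd p)) \<partial>(gauss_diag lam \<Otimes>\<^sub>M gauss_diag lam))
      = (\<integral>\<^sup>+ x. \<integral>\<^sup>+ y. ennreal (GG lam \<rho> x y) \<partial>gauss_diag lam \<partial>gauss_diag lam)"
    using PX.nn_integral_fst[OF m] by simp
  also have "\<dots> = (\<integral>\<^sup>+ x. 1 \<partial>gauss_diag lam)"
    by (simp add: GG_int_snd[OF lam_pos r0 r1])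
  also have "\<dots> = 1" using PX.emeasure_space_1 by simp
  finally show ?thesis .
qed

lemma GG_marginals:
  fixes lam \<rho> :: "'i::finite \<Rightarrow> real"
  assumes lam_pos: "\<And>i. lam i > 0" and r0: "\<And>i. 0 < \<rho> i" and r1: "\<And>i. \<rho> i < 1"
  defines "D \<equiv> density (gauss_diag lam \<Otimes>\<^sub>M gauss_diag lam) (\<lambda>p. ennreal (GG lam \<rho> (fst p) (snd p)))"
  shows "distr D vec_space fst = gauss_diag lam" "distr D vec_space snd = gauss_diag lam"
proof -
  interpret PX: prob_space "gauss_diag lam" by (rule prob_space_gauss) (rule lam_pos)
  interpret P: pair_sigma_finite "gauss_diag lam" "gauss_diag lam" ..
  have m[measurable]: "(\<lambda>p. ennreal (GG lam \<rho> (fst p) (snd p))) \<in> borel_measurable (gauss_diag lam \<Otimes>\<^sub>M gauss_diag lam)"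
    using GG_measurable[of lam \<rho>] by simp
  have sD[measurable_cong]: "sets D = sets (vec_space \<Otimes>\<^sub>M vec_space)" unfolding D_def by simp
  show "distr D vec_space fst = gauss_diag lam"
  proof (rule measure_eqI)
    show "sets (distr D vec_space fst) = sets (gauss_diag lam)" by simp
    fix B assume "B \<in> sets (distr D vec_space fst)"
    then have B[measurable]: "B \<in> sets vec_space" by simp
    have "emeasure (distr D vec_space fst) B = emeasure D (B \<times> UNIV)"
      by (subst emeasure_distr) (auto simp: D_def space_pair_measure intro!: arg_cong[where f="emeasure _"])
    also have "\<dots> = (\<integral>\<^sup>+ p. ennreal (GG lam \<rho> (fst p) (snd p)) * indicator (B \<times> UNIV) p \<partial>(gauss_diag lam \<Otimes>\<^sub>M gauss_diag lam))"
      unfolding D_def by (subst emeasure_density) (auto intro!: pair_measureI)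
    also have "\<dots> = (\<integral>\<^sup>+ x. \<integral>\<^sup>+ y. ennreal (GG lam \<rho> x y) * indicator B x \<partial>gauss_diag lam \<partial>gauss_diag lam)"
      by (subst PX.nn_integral_fst[symmetric]) (auto simp: indicator_times intro!: nn_integral_cong)
    also have "\<dots> = (\<integral>\<^sup>+ x. indicator B x \<partial>gauss_diag lam)"
      by (rule nn_integral_cong, subst nn_integral_multc) (simp_all add: GG_int_snd[OF lam_pos r0 r1])
    also have "\<dots> = emeasure (gauss_diag lam) B" by simp
    finally show "emeasure (distr D vec_space fst) B = emeasure (gauss_diag lam) B" .
  qed
  show "distr D vec_space snd = gauss_diag lam"
  proof (rule measure_eqI)
    show "sets (distr D vec_space snd) = sets (gauss_diag lam)" by simp
    fix B assume "B \<in> sets (distr D vec_space snd)"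
    then have B[measurable]: "B \<in> sets vec_space" by simp
    have "emeasure (distr D vec_space snd) B = emeasure D (UNIV \<times> B)"
      by (subst emeasure_distr) (auto simp: D_def space_pair_measure intro!: arg_cong[where f="emeasure _"])
    also have "\<dots> = (\<integral>\<^sup>+ p. ennreal (GG lam \<rho> (fst p) (snd p)) * indicator (UNIV \<times> B) p \<partial>(gauss_diag lam \<Otimes>\<^sub>M gauss_diag lam))"
      unfolding D_def by (subst emeasure_density) (auto intro!: pair_measureI)
    also have "\<dots> = (\<integral>\<^sup>+ y. \<integral>\<^sup>+ x. ennreal (GG lam \<rho> y x) * indicator B y \<partial>gauss_diag lam \<partial>gauss_diag lam)"
      by (subst P.nn_integral_snd[symmetric]) (auto simp: indicator_times GG_sym[of lam \<rho>] intro!: nn_integral_cong)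
    also have "\<dots> = (\<integral>\<^sup>+ y. indicator B y \<partial>gauss_diag lam)"
      by (rule nn_integral_cong, subst nn_integral_multc) (simp_all add: GG_int_snd[OF lam_pos r0 r1])
    also have "\<dots> = emeasure (gauss_diag lam) B" by simp
    finally show "emeasure (distr D vec_space snd) B = emeasure (gauss_diag lam) B" .
  qed
qed



lemma gauss_component:
  fixes lam :: "'i::finite \<Rightarrow> real"
  assumes lam_pos: "\<And>i. lam i > 0"
  shows "distr (gauss_diag lam) borel (\<lambda>x. x i) = density lborel (normal_density 0 (sqrt (lam i)))"
proof -
  have "distr (gauss_diag lam) (density lborel (normal_density 0 (sqrt (lam i)))) (\<lambda>x. x i) = density lborel (normal_density 0 (sqrt (lam i)))"
    unfolding gauss_diag_def by (rule distr_PiM_component) (auto intro!: prob_space_normal_density simp: lam_pos)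
  moreover have "distr (gauss_diag lam) borel (\<lambda>x. x i) = distr (gauss_diag lam) (density lborel (normal_density 0 (sqrt (lam i)))) (\<lambda>x. x i)"
    by (rule distr_cong) auto
  ultimately show ?thesis by simp
qed

lemma gauss_moment:
  fixes lam :: "'i::finite \<Rightarrow> real"
  assumes lam_pos: "\<And>i. lam i > 0"
  shows "integrable (gauss_diag lam) (\<lambda>x. (x i)\<^sup>2)" "(\<integral>x. (x i)\<^sup>2 \<partial>gauss_diag lam) = lam i"
proof -
  have m: "(\<lambda>x::'i\<Rightarrow>real. x i) \<in> measurable (gauss_diag lam) borel" by simp
  have i1: "integrable lborel (\<lambda>t. normal_density 0 (sqrt (lam i)) t * t\<^sup>2)"
    using integrable_normal_moment[where \<mu>=0 and \<sigma>="sqrt (lam i)" and k=2] lam_pos[of i] by simp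
  have "integrable (density lborel (normal_density 0 (sqrt (lam i)))) (\<lambda>t. t\<^sup>2)"
    by (subst integrable_density) (use i1 in auto)
  then have "integrable (distr (gauss_diag lam) borel (\<lambda>x. x i)) (\<lambda>t. t\<^sup>2)"
    by (simp add: gauss_component[OF lam_pos])
  then show "integrable (gauss_diag lam) (\<lambda>x. (x i)\<^sup>2)"
    by (subst (asm) integrable_distr_eq[OF m]) auto
  have "(\<integral>x. (x i)\<^sup>2 \<partial>gauss_diag lam) = (\<integral>t. t\<^sup>2 \<partial>distr (gauss_diag lam) borel (\<lambda>x. x i))"
    by (rule integral_distr[symmetric, OF m]) simp
  also have "\<dots> = (\<integral>t. t\<^sup>2 \<partial>density lborel (normal_density 0 (sqrt (lam i))))"
    by (simp add: gauss_component[OF lam_pos])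
  also have "\<dots> = (\<integral>t. normal_density 0 (sqrt (lam i)) t * (t - 0)^(2*1) \<partial>lborel)"
    by (subst integral_density) auto
  also have "\<dots> = lam i"
    using lam_pos[of i] integral_normal_moment_even[where \<mu>=0 and \<sigma>="sqrt (lam i)" and k=1] by simp
  finally show "(\<integral>x. (x i)\<^sup>2 \<partial>gauss_diag lam) = lam i" .
qed

definition marg_ok :: "('i::finite \<Rightarrow> real) \<Rightarrow> (('i \<Rightarrow> real) \<times> ('i \<Rightarrow> real)) measure \<Rightarrow> bool" where
  "marg_ok lam J \<longleftrightarrow> sets J = sets (vec_space \<Otimes>\<^sub>M vec_space) \<and> prob_space J
     \<and> distr J vec_space fst = gauss_diag lam \<and> distr J vec_space snd = gauss_diag lam"

lemma sq_bound: "(a - b)\<^sup>2 \<le> 2 * a\<^sup>2 + 2 * (b::real)\<^sup>2"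
proof -
  have "2 * a\<^sup>2 + 2 * b\<^sup>2 - (a - b)\<^sup>2 = (a + b)\<^sup>2" by (simp add: power2_eq_square algebra_simps)
  moreover have "0 \<le> (a + b)\<^sup>2" by simp
  ultimately show ?thesis by linarith
qed

lemma J_moments:
  fixes lam :: "'i::finite \<Rightarrow> real"
  assumes lam_pos: "\<And>i. lam i > 0" and J: "marg_ok lam J"
  shows "integrable J (\<lambda>p. (fst p i)\<^sup>2)" "(\<integral>p. (fst p i)\<^sup>2 \<partial>J) = lam i"
    "integrable J (\<lambda>p. (snd p i)\<^sup>2)" "(\<integral>p. (snd p i)\<^sup>2 \<partial>J) = lam i"
    "integrable J (\<lambda>p. (fst p i - snd p i)\<^sup>2)"
proof -
  have sJ[measurable_cong]: "sets J = sets (vec_space \<Otimes>\<^sub>M vec_space)" using J by (simp add: marg_ok_def)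
  have f: "fst \<in> measurable J vec_space" and s: "snd \<in> measurable J vec_space" by auto
  have g1: "integrable (gauss_diag lam) (\<lambda>x. (x i)\<^sup>2)" by (rule gauss_moment(1)) (rule lam_pos)
  have g2: "(\<integral>x. (x i)\<^sup>2 \<partial>gauss_diag lam) = lam i" by (rule gauss_moment(2)) (rule lam_pos)
  have df: "distr J vec_space fst = gauss_diag lam" and ds: "distr J vec_space snd = gauss_diag lam"
    using J by (auto simp: marg_ok_def)
  show i1: "integrable J (\<lambda>p. (fst p i)\<^sup>2)"
    using g1 unfolding df[symmetric] by (subst (asm) integrable_distr_eq[OF f]) auto
  show "(\<integral>p. (fst p i)\<^sup>2 \<partial>J) = lam i"
    using g2 unfolding df[symmetric] by (subst (asm) integral_distr[OF f]) auto
  show i2: "integrable J (\<lambda>p. (snd p i)\<^sup>2)"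
    using g1 unfolding ds[symmetric] by (subst (asm) integrable_distr_eq[OF s]) auto
  show "(\<integral>p. (snd p i)\<^sup>2 \<partial>J) = lam i"
    using g2 unfolding ds[symmetric] by (subst (asm) integral_distr[OF s]) auto
  show "integrable J (\<lambda>p. (fst p i - snd p i)\<^sup>2)"
  proof (rule Bochner_Integration.integrable_bound)
    show "integrable J (\<lambda>p. 2 * (fst p i)\<^sup>2 + 2 * (snd p i)\<^sup>2)" using i1 i2 by simp
    show "(\<lambda>p. (fst p i - snd p i)\<^sup>2) \<in> borel_measurable J" by measurable
    show "AE p in J. norm ((fst p i - snd p i)\<^sup>2) \<le> norm (2 * (fst p i)\<^sup>2 + 2 * (snd p i)\<^sup>2)"
    proof (intro AE_I2)
      fix p :: "('i \<Rightarrow> real) \<times> ('i \<Rightarrow> real)"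
      show "norm ((fst p i - snd p i)\<^sup>2) \<le> norm (2 * (fst p i)\<^sup>2 + 2 * (snd p i)\<^sup>2)"
        using sq_bound[of "fst p i" "snd p i"] by simp
    qed
  qed
qed



definition lgE :: "real \<Rightarrow> real \<Rightarrow> real \<Rightarrow> real \<Rightarrow> real" where
  "lgE \<rho> l x y = - ln (sqrt (1 - \<rho>\<^sup>2)) + (\<rho> - \<rho>\<^sup>2) / (2 * (1 - \<rho>\<^sup>2) * l) * (x\<^sup>2 + y\<^sup>2)
      - \<rho> / (2 * (1 - \<rho>\<^sup>2) * l) * (x - y)\<^sup>2"

lemma log_GG: "log 2 (GG lam \<rho> x y) = (\<Sum>i\<in>UNIV. lgE (\<rho> i) (lam i) (x i) (y i)) / ln 2"
proof -
  have "GG lam \<rho> x y = exp (\<Sum>i\<in>UNIV. lgE (\<rho> i) (lam i) (x i) (y i))"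
    unfolding GG_def kk_def lgE_def by (simp add: exp_sum)
  then show ?thesis by (simp add: log_def)
qed

lemma int_logGG:
  fixes lam \<rho> :: "'i::finite \<Rightarrow> real"
  assumes lam_pos: "\<And>i. lam i > 0" and J: "marg_ok lam J"
    and tt: "\<And>i. \<rho> i / (2 * (1 - (\<rho> i)\<^sup>2) * lam i) = t"
  shows "integrable J (\<lambda>p. log 2 (GG lam \<rho> (fst p) (snd p)))"
    "(\<integral>p. log 2 (GG lam \<rho> (fst p) (snd p)) \<partial>J) =
      ((\<Sum>i\<in>UNIV. - ln (sqrt (1 - (\<rho> i)\<^sup>2)) + ((\<rho> i) - (\<rho> i)\<^sup>2) / (2 * (1 - (\<rho> i)\<^sup>2) * lam i) * (2 * lam i))
       - t * (\<Sum>i\<in>UNIV. \<integral>p. (fst p i - snd p i)\<^sup>2 \<partial>J)) / ln 2"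
proof -
  define c where "c i = - ln (sqrt (1 - (\<rho> i)\<^sup>2))" for i
  define a where "a i = ((\<rho> i) - (\<rho> i)\<^sup>2) / (2 * (1 - (\<rho> i)\<^sup>2) * lam i)" for i
  have eq: "log 2 (GG lam \<rho> (fst p) (snd p)) =
      (\<Sum>i\<in>UNIV. c i + a i * (fst p i)\<^sup>2 + a i * (snd p i)\<^sup>2 - t * (fst p i - snd p i)\<^sup>2) / ln 2" for p
  proof -
    have "lgE (\<rho> i) (lam i) (fst p i) (snd p i) = c i + a i * (fst p i)\<^sup>2 + a i * (snd p i)\<^sup>2 - t * (fst p i - snd p i)\<^sup>2" for i
      unfolding lgE_def c_def a_def tt[of i, symmetric] distrib_left by (simp only: add.assoc)
    then show ?thesis unfolding log_GG by simp
  qed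
  have i1: "integrable J (\<lambda>p. (fst p i)\<^sup>2)" and i2: "integrable J (\<lambda>p. (snd p i)\<^sup>2)"
    and i3: "integrable J (\<lambda>p. (fst p i - snd p i)\<^sup>2)"
    and m1: "(\<integral>p. (fst p i)\<^sup>2 \<partial>J) = lam i" and m2: "(\<integral>p. (snd p i)\<^sup>2 \<partial>J) = lam i" for i
    using J_moments[OF lam_pos J] by auto
  interpret J: prob_space J using J by (simp add: marg_ok_def)
  have intS: "integrable J (\<lambda>p. \<Sum>i\<in>UNIV. c i + a i * (fst p i)\<^sup>2 + a i * (snd p i)\<^sup>2 - t * (fst p i - snd p i)\<^sup>2)"
    using i1 i2 i3 by (intro Bochner_Integration.integrable_sum) auto
  show "integrable J (\<lambda>p. log 2 (GG lam \<rho> (fst p) (snd p)))"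
    unfolding eq using intS by simp
  have "(\<integral>p. log 2 (GG lam \<rho> (fst p) (snd p)) \<partial>J)
      = (\<integral>p. (\<Sum>i\<in>UNIV. c i + a i * (fst p i)\<^sup>2 + a i * (snd p i)\<^sup>2 - t * (fst p i - snd p i)\<^sup>2) \<partial>J) / ln 2"
    unfolding eq by simp
  also have "(\<integral>p. (\<Sum>i\<in>UNIV. c i + a i * (fst p i)\<^sup>2 + a i * (snd p i)\<^sup>2 - t * (fst p i - snd p i)\<^sup>2) \<partial>J)
      = (\<Sum>i\<in>UNIV. \<integral>p. c i + a i * (fst p i)\<^sup>2 + a i * (snd p i)\<^sup>2 - t * (fst p i - snd p i)\<^sup>2 \<partial>J)"
    using i1 i2 i3 by (intro Bochner_Integration.integral_sum) auto
  also have "\<dots> = (\<Sum>i\<in>UNIV. c i + a i * (2 * lam i) - t * (\<integral>p. (fst p i - snd p i)\<^sup>2 \<partial>J))"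
  proof (intro sum.cong refl)
    fix i
    show "(\<integral>p. c i + a i * (fst p i)\<^sup>2 + a i * (snd p i)\<^sup>2 - t * (fst p i - snd p i)\<^sup>2 \<partial>J)
        = c i + a i * (2 * lam i) - t * (\<integral>p. (fst p i - snd p i)\<^sup>2 \<partial>J)"
      using i1[of i] i2[of i] i3[of i] m1[of i] m2[of i] J.prob_space
      by (simp add: Bochner_Integration.integral_diff Bochner_Integration.integral_add algebra_simps)
  qed
  also have "\<dots> = (\<Sum>i\<in>UNIV. c i + a i * (2 * lam i)) - t * (\<Sum>i\<in>UNIV. \<integral>p. (fst p i - snd p i)\<^sup>2 \<partial>J)"
    by (simp add: sum_subtractf sum_distrib_left)
  finally show "(\<integral>p. log 2 (GG lam \<rho> (fst p) (snd p)) \<partial>J) =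
      ((\<Sum>i\<in>UNIV. - ln (sqrt (1 - (\<rho> i)\<^sup>2)) + ((\<rho> i) - (\<rho> i)\<^sup>2) / (2 * (1 - (\<rho> i)\<^sup>2) * lam i) * (2 * lam i))
       - t * (\<Sum>i\<in>UNIV. \<integral>p. (fst p i - snd p i)\<^sup>2 \<partial>J)) / ln 2"
    unfolding c_def a_def .
qed

lemma sq_dist_eq:
  fixes lam :: "'i::finite \<Rightarrow> real"
  assumes lam_pos: "\<And>i. lam i > 0" and J: "marg_ok lam J"
  shows "sq_distortion J = ennreal (\<Sum>i\<in>UNIV. \<integral>p. (fst p i - snd p i)\<^sup>2 \<partial>J)"
proof -
  have i3: "integrable J (\<lambda>p. (fst p i - snd p i)\<^sup>2)" for i
    using J_moments[OF lam_pos J] by auto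
  have "sq_distortion J = ennreal (\<integral>p. (\<Sum>i\<in>UNIV. (fst p i - snd p i)\<^sup>2) \<partial>J)"
    unfolding sq_distortion_def
    by (rule nn_integral_eq_integral) (use i3 in \<open>auto intro!: Bochner_Integration.integrable_sum sum_nonneg\<close>)
  also have "(\<integral>p. (\<Sum>i\<in>UNIV. (fst p i - snd p i)\<^sup>2) \<partial>J) = (\<Sum>i\<in>UNIV. \<integral>p. (fst p i - snd p i)\<^sup>2 \<partial>J)"
    by (rule Bochner_Integration.integral_sum) (use i3 in auto)
  finally show ?thesis .
qed



lemma gauss_singleton:
  fixes lam :: "'i::finite \<Rightarrow> real"
  assumes lam_pos: "\<And>i. lam i > 0"
  shows "emeasure (gauss_diag lam) {x} = 0"
proof -
  interpret P: product_sigma_finite "\<lambda>i. density lborel (normal_density 0 (sqrt (lam i)))"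
    unfolding product_sigma_finite_def using prob_space_normal_density lam_pos prob_space_imp_sigma_finite
    by (metis real_sqrt_gt_0_iff)
  have x: "{x} = PiE UNIV (\<lambda>i. {x i})" by (auto simp: PiE_iff)
  have z: "emeasure (density lborel (normal_density 0 (sqrt (lam i)))) {x i} = 0" for i
  proof -
    have "{x i} \<in> null_sets (density lborel (normal_density 0 (sqrt (lam i))))"
    proof (subst null_sets_density_iff)
      have "AE y in lborel. y \<in> {x i} \<longrightarrow> normal_density 0 (sqrt (lam i)) y = 0"
        using AE_lborel_singleton[of "x i"] by eventually_elim auto
      then show "{x i} \<in> sets lborel \<and> (AE y in lborel. y \<in> {x i} \<longrightarrow> ennreal (normal_density 0 (sqrt (lam i)) y) = 0)"
        by auto
    qed simp
    then show ?thesis by auto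
  qed
  have "emeasure (gauss_diag lam) {x} = (\<Prod>i\<in>UNIV. emeasure (density lborel (normal_density 0 (sqrt (lam i)))) {x i})"
    unfolding gauss_diag_def x by (rule P.emeasure_PiM) auto
  also have "\<dots> = 0" by (rule prod_zero) (auto simp: z)
  finally show ?thesis .
qed

lemma diag_meas[measurable]: "{p::('i::finite \<Rightarrow> real) \<times> ('i \<Rightarrow> real). fst p = snd p} \<in> sets (vec_space \<Otimes>\<^sub>M vec_space)"
proof -
  have "{p::('i \<Rightarrow> real) \<times> ('i \<Rightarrow> real). fst p = snd p} = (\<Inter>i\<in>UNIV. {p \<in> space (vec_space \<Otimes>\<^sub>M vec_space). fst p i = snd p i})"
    by (auto simp: space_pair_measure fun_eq_iff)
  also have "\<dots> \<in> sets (vec_space \<Otimes>\<^sub>M vec_space)" by (intro sets.finite_INT) auto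
  finally show ?thesis .
qed

lemma theta0_infinite:
  fixes lam :: "'i::finite \<Rightarrow> real"
  assumes lam_pos: "\<And>i. lam i > 0" and J: "marg_ok lam J" and D0: "sq_distortion J \<le> 0"
  shows "mutual_info_joint vec_space vec_space J = \<infinity>"
proof -
  have sJ[measurable_cong]: "sets J = sets (vec_space \<Otimes>\<^sub>M vec_space)" using J by (simp add: marg_ok_def)
  interpret J: prob_space J using J by (simp add: marg_ok_def)
  interpret PX: prob_space "gauss_diag lam" by (rule prob_space_gauss) (rule lam_pos)
  let ?D = "{p::('i \<Rightarrow> real) \<times> ('i \<Rightarrow> real). fst p = snd p}"
  have Q: "distr J vec_space fst \<Otimes>\<^sub>M distr J vec_space snd = gauss_diag lam \<Otimes>\<^sub>M gauss_diag lam"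
    using J by (simp add: marg_ok_def)
  have "emeasure (gauss_diag lam \<Otimes>\<^sub>M gauss_diag lam) ?D = (\<integral>\<^sup>+x. emeasure (gauss_diag lam) (Pair x -` ?D) \<partial>gauss_diag lam)"
    by (rule PX.emeasure_pair_measure_alt) simp
  also have "\<dots> = (\<integral>\<^sup>+x. 0 \<partial>gauss_diag lam)"
  proof (rule nn_integral_cong)
    fix x :: "'i \<Rightarrow> real"
    have "Pair x -` ?D = {x}" by auto
    then show "emeasure (gauss_diag lam) (Pair x -` ?D) = 0" by (simp add: gauss_singleton[OF lam_pos])
  qed
  finally have nQ: "?D \<in> null_sets (gauss_diag lam \<Otimes>\<^sub>M gauss_diag lam)" by (auto intro: null_setsI)
  have "(\<integral>\<^sup>+p. ennreal (\<Sum>i\<in>UNIV. (fst p i - snd p i)\<^sup>2) \<partial>J) = 0"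
    using D0 unfolding sq_distortion_def by simp
  then have "AE p in J. ennreal (\<Sum>i\<in>UNIV. (fst p i - snd p i)\<^sup>2) = 0"
    by (subst (asm) nn_integral_0_iff_AE) auto
  then have aeD: "AE p in J. p \<in> ?D"
  proof eventually_elim
    case (elim p)
    then have "(\<Sum>i\<in>UNIV. (fst p i - snd p i)\<^sup>2) = 0"
      by (simp add: sum_nonneg)
    then have "\<forall>i\<in>UNIV. (fst p i - snd p i)\<^sup>2 = 0"
      by (subst (asm) sum_nonneg_eq_0_iff) auto
    then show ?case by (auto simp: fun_eq_iff)
  qed
  have nac: "\<not> absolutely_continuous (gauss_diag lam \<Otimes>\<^sub>M gauss_diag lam) J"
  proof
    assume "absolutely_continuous (gauss_diag lam \<Otimes>\<^sub>M gauss_diag lam) J"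
    then have "?D \<in> null_sets J" using nQ unfolding absolutely_continuous_def by auto
    then have "AE p in J. p \<notin> ?D" by (rule AE_not_in)
    with aeD have "AE p in J. False" by eventually_elim auto
    then show False by (simp add: J.AE_False)
  qed
  show ?thesis
    unfolding mutual_info_joint_def rel_entropy2_def Q using nac by simp
qed



lemma main_pos:
  fixes M :: "'a measure"
    and X U Z :: "'a \<Rightarrow> ('i::finite \<Rightarrow> real)"
    and lam \<alpha> :: "'i \<Rightarrow> real"
  assumes "prob_space M"
    and lam_pos: "\<And>i. lam i > 0"
    and X_meas[measurable]: "X \<in> measurable M vec_space"
    and U_meas[measurable]: "U \<in> measurable M vec_space"
    and X_law: "distr M vec_space X = gauss_diag lam"
    and U_law: "distr M vec_space U = gauss_diag (\<lambda>_. 1)"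
    and indep: "prob_space.indep_var M vec_space X vec_space U"
    and a0: "\<And>i. 0 < \<alpha> i" and a1: "\<And>i. \<alpha> i < 1"
    and tt: "\<And>i. \<alpha> i / (2 * (1 - (\<alpha> i)\<^sup>2) * lam i) = t" and t0: "t \<ge> 0"
    and Z_def: "Z = (\<lambda>\<omega> i. \<alpha> i * X \<omega> i + sqrt (1 - (\<alpha> i)\<^sup>2) * sqrt (lam i) * U \<omega> i)"
  shows "distr M vec_space Z = distr M vec_space X \<and>
        mutual_info_joint vec_space vec_space
            (distr M (vec_space \<Otimes>\<^sub>M vec_space) (\<lambda>\<omega>. (X \<omega>, Z \<omega>)))
        = (\<Sqinter>J \<in> {J. sets J = sets (vec_space \<Otimes>\<^sub>M vec_space) \<and> prob_space J
                      \<and> distr J vec_space fst = distr M vec_space X \<and> distr J vec_space snd = distr M vec_space X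
                      \<and> sq_distortion J \<le> (\<integral>\<^sup>+ \<omega>. ennreal (\<Sum>i\<in>UNIV. (X \<omega> i - Z \<omega> i)\<^sup>2) \<partial>M)}.
             mutual_info_joint vec_space vec_space J)"
proof -
  interpret prob_space M by fact
  let ?PX = "gauss_diag lam"
  let ?Q = "?PX \<Otimes>\<^sub>M ?PX"
  let ?G = "\<lambda>p. GG lam \<alpha> (fst p) (snd p)"
  define Jst where "Jst = distr M (vec_space \<Otimes>\<^sub>M vec_space) (\<lambda>\<omega>. (X \<omega>, Z \<omega>))"
  have Zm[measurable]: "Z \<in> measurable M vec_space"
    unfolding Z_def by (intro measurable_PiM_single') (auto simp: space_PiM)
  have Jd: "Jst = density ?Q (\<lambda>p. ennreal (?G p))"
    unfolding Jst_def Z_def by (rule joint_law) (fact | rule a0 a1)+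
  have Gm[measurable]: "?G \<in> borel_measurable ?Q"
    using GG_measurable[of lam \<alpha>] by simp
  have margs: "distr Jst vec_space fst = ?PX" "distr Jst vec_space snd = ?PX"
    unfolding Jd by (rule GG_marginals[OF lam_pos a0 a1])+
  have psJ: "prob_space Jst" unfolding Jst_def by (rule prob_space_distr) simp
  have sJst: "sets Jst = sets (vec_space \<Otimes>\<^sub>M vec_space)" unfolding Jst_def by simp
  have okJ: "marg_ok lam Jst" unfolding marg_ok_def using margs psJ sJst by simp
  have Zlaw: "distr M vec_space Z = distr M vec_space X"
  proof -
    have "distr M vec_space Z = distr Jst vec_space snd"
      unfolding Jst_def by (subst distr_distr) (auto simp: comp_def)
    then show ?thesis using margs X_law by simp
  qed
  have Deq: "(\<integral>\<^sup>+ \<omega>. ennreal (\<Sum>i\<in>UNIV. (X \<omega> i - Z \<omega> i)\<^sup>2) \<partial>M) = sq_distortion Jst"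
    unfolding sq_distortion_def Jst_def by (subst nn_integral_distr) auto
  define e where "e J = (\<Sum>i\<in>UNIV. \<integral>p. (fst p i - snd p i)\<^sup>2 \<partial>J)" for J :: "(('i \<Rightarrow> real) \<times> ('i \<Rightarrow> real)) measure"
  define C where "C = (\<Sum>i\<in>UNIV. - ln (sqrt (1 - (\<alpha> i)\<^sup>2)) + ((\<alpha> i) - (\<alpha> i)\<^sup>2) / (2 * (1 - (\<alpha> i)\<^sup>2) * lam i) * (2 * lam i))"
  have intJ: "integrable J (\<lambda>p. log 2 (?G p))" "(\<integral>p. log 2 (?G p) \<partial>J) = (C - t * e J) / ln 2"
    if "marg_ok lam J" for J
    using int_logGG[OF lam_pos that tt] unfolding C_def e_def by auto
  have e_nn: "0 \<le> e J" for J unfolding e_def by (intro sum_nonneg integral_nonneg_AE) auto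
  have sqJ: "sq_distortion J = ennreal (e J)" if "marg_ok lam J" for J
    unfolding e_def by (rule sq_dist_eq[OF lam_pos that])
  have sfQ: "sigma_finite_measure ?Q"
  proof -
    interpret PX: prob_space ?PX by (rule prob_space_gauss) (rule lam_pos)
    interpret P: pair_sigma_finite ?PX ?PX ..
    show ?thesis by unfold_locales
  qed
  have MIst: "mutual_info_joint vec_space vec_space Jst = ennreal ((C - t * e Jst) / ln 2)"
  proof -
    have "mutual_info_joint vec_space vec_space Jst = rel_entropy2 Jst ?Q"
      unfolding mutual_info_joint_def margs ..
    also have "\<dots> = ennreal (\<integral>p. log 2 (?G p) \<partial>Jst)"
      unfolding Jd by (rule rel_entropy_density[OF sfQ Gm]) (use GG_pos intJ(1)[OF okJ] Jd in auto)
    finally show ?thesis using intJ(2)[OF okJ] by simp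
  qed
  let ?S = "{J. sets J = sets (vec_space \<Otimes>\<^sub>M vec_space) \<and> prob_space J
                      \<and> distr J vec_space fst = distr M vec_space X \<and> distr J vec_space snd = distr M vec_space X
                      \<and> sq_distortion J \<le> (\<integral>\<^sup>+ \<omega>. ennreal (\<Sum>i\<in>UNIV. (X \<omega> i - Z \<omega> i)\<^sup>2) \<partial>M)}"
  have inS: "Jst \<in> ?S" using sJst psJ margs X_law Deq by simp
  have lower: "mutual_info_joint vec_space vec_space Jst \<le> mutual_info_joint vec_space vec_space J" if "J \<in> ?S" for J
  proof -
    have okJ': "marg_ok lam J" using that X_law unfolding marg_ok_def by simp
    have sJ: "sets J = sets ?Q" using that by simp
    interpret J: prob_space J using that by simp
    have "ennreal (e J) \<le> ennreal (e Jst)"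
      using that Deq sqJ[OF okJ'] sqJ[OF okJ] by simp
    then have eJ: "e J \<le> e Jst" using e_nn[of Jst] by simp
    have MIJ: "mutual_info_joint vec_space vec_space J = rel_entropy2 J ?Q"
      unfolding mutual_info_joint_def using that X_law by simp
    show ?thesis
    proof (cases "absolutely_continuous ?Q J \<and> integrable J (entropy_density 2 ?Q J)")
      case False
      show ?thesis unfolding MIJ rel_entropy2_def by (subst if_not_P[OF False]) simp
    next
      case True
      have "(\<integral>p. log 2 (?G p) \<partial>J) \<le> KL_divergence 2 ?Q J"
      proof (rule gibbs[OF sfQ _ sJ])
        show "prob_space J" by (rule J.prob_space_axioms)
        show "absolutely_continuous ?Q J" "integrable J (entropy_density 2 ?Q J)" using True by auto
        show "?G \<in> borel_measurable ?Q" by (rule Gm)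
        show "0 < ?G z" for z by (rule GG_pos)
        have "(\<integral>\<^sup>+z. ennreal (?G z) \<partial>?Q) = 1" by (rule GG_int_total) (rule lam_pos a0 a1)+
        then show "(\<integral>\<^sup>+z. ennreal (?G z) \<partial>?Q) \<le> 1" by simp
        show "integrable J (\<lambda>z. log 2 (?G z))" by (rule intJ(1)[OF okJ'])
      qed
      moreover have "(C - t * e Jst) / ln 2 \<le> (\<integral>p. log 2 (?G p) \<partial>J)"
        unfolding intJ(2)[OF okJ'] using eJ t0 by (intro divide_right_mono) (auto intro: mult_left_mono)
      ultimately have "(C - t * e Jst) / ln 2 \<le> KL_divergence 2 ?Q J" by linarith
      then show ?thesis unfolding MIJ MIst rel_entropy2_def using True by (simp add: ennreal_leI)
    qed
  qed
  have "mutual_info_joint vec_space vec_space Jst = (\<Sqinter>J\<in>?S. mutual_info_joint vec_space vec_space J)"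
  proof (rule antisym)
    show "mutual_info_joint vec_space vec_space Jst \<le> (\<Sqinter>J\<in>?S. mutual_info_joint vec_space vec_space J)"
      by (rule INF_greatest) (rule lower)
    show "(\<Sqinter>J\<in>?S. mutual_info_joint vec_space vec_space J) \<le> mutual_info_joint vec_space vec_space Jst"
      by (rule INF_lower) (rule inS)
  qed
  then show ?thesis using Zlaw unfolding Jst_def by simp
qed



lemma main_zero:
  fixes M :: "'a measure"
    and X U Z :: "'a \<Rightarrow> ('i::finite \<Rightarrow> real)"
    and lam \<alpha> :: "'i \<Rightarrow> real"
  assumes "prob_space M"
    and lam_pos: "\<And>i. lam i > 0"
    and X_meas[measurable]: "X \<in> measurable M vec_space"
    and X_law: "distr M vec_space X = gauss_diag lam"
    and a1: "\<And>i. \<alpha> i = 1"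
    and Z_def: "Z = (\<lambda>\<omega> i. \<alpha> i * X \<omega> i + sqrt (1 - (\<alpha> i)\<^sup>2) * sqrt (lam i) * U \<omega> i)"
  shows "distr M vec_space Z = distr M vec_space X \<and>
        mutual_info_joint vec_space vec_space
            (distr M (vec_space \<Otimes>\<^sub>M vec_space) (\<lambda>\<omega>. (X \<omega>, Z \<omega>)))
        = (\<Sqinter>J \<in> {J. sets J = sets (vec_space \<Otimes>\<^sub>M vec_space) \<and> prob_space J
                      \<and> distr J vec_space fst = distr M vec_space X \<and> distr J vec_space snd = distr M vec_space X
                      \<and> sq_distortion J \<le> (\<integral>\<^sup>+ \<omega>. ennreal (\<Sum>i\<in>UNIV. (X \<omega> i - Z \<omega> i)\<^sup>2) \<partial>M)}.
             mutual_info_joint vec_space vec_space J)"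
proof -
  interpret prob_space M by fact
  have ZX: "Z = X" unfolding Z_def using a1 by (simp add: fun_eq_iff)
  define Jst where "Jst = distr M (vec_space \<Otimes>\<^sub>M vec_space) (\<lambda>\<omega>. (X \<omega>, X \<omega>))"
  have okJ: "marg_ok lam Jst"
    unfolding marg_ok_def Jst_def
    by (auto intro!: prob_space_distr simp: distr_distr comp_def X_law)
  have D0: "(\<integral>\<^sup>+ \<omega>. ennreal (\<Sum>i\<in>UNIV. (X \<omega> i - Z \<omega> i)\<^sup>2) \<partial>M) = 0" unfolding ZX by simp
  have sq0: "sq_distortion Jst \<le> 0"
    unfolding sq_distortion_def Jst_def by (subst nn_integral_distr) auto
  let ?S = "{J. sets J = sets (vec_space \<Otimes>\<^sub>M vec_space) \<and> prob_space J
                      \<and> distr J vec_space fst = distr M vec_space X \<and> distr J vec_space snd = distr M vec_space X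
                      \<and> sq_distortion J \<le> (\<integral>\<^sup>+ \<omega>. ennreal (\<Sum>i\<in>UNIV. (X \<omega> i - Z \<omega> i)\<^sup>2) \<partial>M)}"
  have "mutual_info_joint vec_space vec_space J = \<infinity>" if "J \<in> ?S" for J
  proof (rule theta0_infinite[OF lam_pos])
    show "marg_ok lam J" using that X_law unfolding marg_ok_def by simp
    show "sq_distortion J \<le> 0" using that D0 by simp
  qed
  then have "(\<Sqinter>J\<in>?S. mutual_info_joint vec_space vec_space J) = \<infinity>"
    by (intro antisym INF_greatest) auto
  moreover have "mutual_info_joint vec_space vec_space Jst = \<infinity>"
    by (rule theta0_infinite[OF lam_pos okJ sq0])
  ultimately show ?thesis unfolding Jst_def ZX by simp
qed

lemma alpha_facts:
  fixes l \<theta> :: real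
  assumes l: "l > 0" and th: "\<theta> > 0"
  defines "a \<equiv> (sqrt (l\<^sup>2 + \<theta>\<^sup>2) - \<theta>) / l"
  shows "0 < a" "a < 1" "a / (2 * (1 - a\<^sup>2) * l) = 1 / (4 * \<theta>)"
proof -
  define s where "s = sqrt (l\<^sup>2 + \<theta>\<^sup>2)"
  have s2: "s\<^sup>2 = l\<^sup>2 + \<theta>\<^sup>2" unfolding s_def by simp
  have s0: "s \<ge> 0" unfolding s_def by simp
  have sth: "s > \<theta>"
  proof -
    have "\<theta>\<^sup>2 < s\<^sup>2" using s2 l by simp
    then show ?thesis using s0 by (intro power_less_imp_less_base[of \<theta> 2 s]) auto
  qed
  have slt: "s < l + \<theta>"
  proof -
    have "s\<^sup>2 < (l + \<theta>)\<^sup>2" using s2 l th by (simp add: power2_eq_square algebra_simps)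
    then show ?thesis using s0 l th by (smt (verit) power_mono)
  qed
  have aeq: "a = (s - \<theta>) / l" unfolding a_def s_def ..
  show "0 < a" unfolding aeq using sth l by simp
  show a1: "a < 1" unfolding aeq using slt l by (simp add: divide_less_eq)
  have al: "a * l = s - \<theta>" unfolding aeq using l by simp
  have "(1 - a\<^sup>2) * l\<^sup>2 = l\<^sup>2 - (a * l)\<^sup>2" by (simp add: power2_eq_square algebra_simps)
  also have "\<dots> = 2 * \<theta> * (a * l)" unfolding al using s2 by (simp add: power2_eq_square algebra_simps)
  finally have k: "(1 - a\<^sup>2) * l\<^sup>2 = 2 * \<theta> * (a * l)" .
  then have k2: "(1 - a\<^sup>2) * l = 2 * \<theta> * a" using l by (simp add: power2_eq_square)
  have apos: "a > 0" unfolding aeq using sth l by simp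
  show "a / (2 * (1 - a\<^sup>2) * l) = 1 / (4 * \<theta>)"
  proof -
    have "2 * (1 - a\<^sup>2) * l = 4 * \<theta> * a" by (subst mult.assoc, subst k2) simp
    then show ?thesis using apos th by simp
  qed
qed

theorem mainTheorem3:
  fixes M :: "'a measure"
    and X U :: "'a \<Rightarrow> ('i::finite \<Rightarrow> real)"
    and lam :: "'i \<Rightarrow> real"
    and \<theta> :: real
  assumes "prob_space M"
    and lam_pos: "\<And>i. lam i > 0"
    and "\<theta> \<ge> 0"
    and X_meas: "X \<in> measurable M vec_space"
    and U_meas: "U \<in> measurable M vec_space"
    and X_law: "distr M vec_space X = gauss_diag lam"
    and U_law: "distr M vec_space U = gauss_diag (\<lambda>_. 1)"
    and indep: "prob_space.indep_var M vec_space X vec_space U"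
  shows
    "let \<alpha> = (\<lambda>i. (sqrt ((lam i)\<^sup>2 + \<theta>\<^sup>2) - \<theta>) / lam i);
         Z = (\<lambda>\<omega>. (\<lambda>i. \<alpha> i * X \<omega> i + sqrt (1 - (\<alpha> i)\<^sup>2) * sqrt (lam i) * U \<omega> i));
         Xhat = Z;
         D = (\<integral>\<^sup>+ \<omega>. ennreal (\<Sum>i\<in>UNIV. (X \<omega> i - Xhat \<omega> i)\<^sup>2) \<partial>M);
         PX = distr M vec_space X
     in distr M vec_space Xhat = PX \<and>
        mutual_info_joint vec_space vec_space
            (distr M (vec_space \<Otimes>\<^sub>M vec_space) (\<lambda>\<omega>. (X \<omega>, Xhat \<omega>)))
        = (\<Sqinter>J \<in> {J. sets J = sets (vec_space \<Otimes>\<^sub>M vec_space) \<and> prob_space J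
                      \<and> distr J vec_space fst = PX \<and> distr J vec_space snd = PX
                      \<and> sq_distortion J \<le> D}.
             mutual_info_joint vec_space vec_space J)"
  proof (cases "\<theta> = 0")
  case True
  have a1: "(sqrt ((lam i)\<^sup>2 + \<theta>\<^sup>2) - \<theta>) / lam i = 1" for i
    using True lam_pos[of i] by simp
  show ?thesis unfolding Let_def
    by (rule main_zero[where \<alpha>="\<lambda>i. (sqrt ((lam i)\<^sup>2 + \<theta>\<^sup>2) - \<theta>) / lam i"])
       (use assms a1 in auto)
next
  case False
  then have th: "\<theta> > 0" using assms(3) by simp
  have F1: "0 < (sqrt ((lam i)\<^sup>2 + \<theta>\<^sup>2) - \<theta>) / lam i" for i by (rule alpha_facts(1)) (rule lam_pos, rule th)
  have F2: "(sqrt ((lam i)\<^sup>2 + \<theta>\<^sup>2) - \<theta>) / lam i < 1" for i by (rule alpha_facts(2)) (rule lam_pos, rule th)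
  have F3: "(sqrt ((lam i)\<^sup>2 + \<theta>\<^sup>2) - \<theta>) / lam i / (2 * (1 - ((sqrt ((lam i)\<^sup>2 + \<theta>\<^sup>2) - \<theta>) / lam i)\<^sup>2) * lam i) = 1 / (4 * \<theta>)" for i
    by (rule alpha_facts(3)) (rule lam_pos, rule th)
  show ?thesis unfolding Let_def
    using F1 F2 F3 th assms by (intro main_pos[where \<alpha>="\<lambda>i. (sqrt ((lam i)\<^sup>2 + \<theta>\<^sup>2) - \<theta>) / lam i" and t="1 / (4 * \<theta>)"]) auto
qed


end
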